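(* For any $t,x$, one has $(\mathbb L_y-\mathbb L_z)\dfrac{1}{\sqrt{f_t(x,y,z)}}=0$ (for any local branch of the square root, where $f_t(x,y,z)\neq0$).
   Context: Here $t,x,y,z$ are complex variables, $f_t(x,y,z)=(t+xy-zx-zy)^2-4(z-t)(z-1)xy$, and $\mathbb L_y=\partial_y\,y(y-1)(y-t)\,\partial_y+y$ is the Lamé operator in the variable $y$ (and similarly $\mathbb L_z$ in $z$). *)

theory Defs
  imports "HOL-Complex_Analysis.Complex_Analysis"
begin

definition ft :: "complex \<Rightarrow> complex \<Rightarrow> complex \<Rightarrow> complex \<Rightarrow> complex" where
  "ft t x y z = (t + x*y - z*x - z*y)^2 - 4*(z-t)*(z-1)*x*y"

definition lame_y :: "complex \<Rightarrow> (complex \<Rightarrow> complex \<Rightarrow> complex) \<Rightarrow> complex \<Rightarrow> complex \<Rightarrow> complex" where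
  "lame_y t F y z = deriv (\<lambda>w. w*(w-1)*(w-t) * deriv (\<lambda>v. F v z) w) y + y * F y z"

definition lame_z :: "complex \<Rightarrow> (complex \<Rightarrow> complex \<Rightarrow> complex) \<Rightarrow> complex \<Rightarrow> complex \<Rightarrow> complex" where
  "lame_z t F y z = deriv (\<lambda>w. w*(w-1)*(w-t) * deriv (\<lambda>v. F y v) w) z + z * F y z"

end

theory Submission
  imports Defs
begin

lemma sqrt_deriv:
  fixes h p :: "complex \<Rightarrow> complex"
  assumes S: "open S" and hc: "continuous_on S h" and hp: "\<And>w. w \<in> S \<Longrightarrow> h w ^ 2 = p w"
    and pn: "\<And>w. w \<in> S \<Longrightarrow> p w \<noteq> 0" and pd: "(p has_field_derivative p') (at w0)" and w0: "w0 \<in> S"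
  shows "(h has_field_derivative p' / (2 * h w0)) (at w0)"
proof -
  have h0: "h w0 \<noteq> 0" using hp[OF w0] pn[OF w0] by auto
  have hl: "(h \<longlongrightarrow> h w0) (at w0)"
    using hc S w0 by (meson continuous_on_eq_continuous_at isContD)
  have sl: "((\<lambda>v. h v + h w0) \<longlongrightarrow> 2 * h w0) (at w0)"
    using tendsto_add[OF hl tendsto_const[of "h w0"]] by (simp only: mult_2)
  have ev1: "\<forall>\<^sub>F v in at w0. h v + h w0 \<noteq> 0"
    using tendsto_imp_eventually_ne[OF sl] h0 by auto
  have ev2: "\<forall>\<^sub>F v in at w0. v \<in> S"
    using S w0 by (simp add: eventually_at_topological) blast
  have pl: "((\<lambda>v. (p v - p w0) / (v - w0)) \<longlongrightarrow> p') (at w0)"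
    using pd by (simp add: has_field_derivative_iff)
  have ql: "((\<lambda>v. ((p v - p w0) / (v - w0)) / (h v + h w0)) \<longlongrightarrow> p' / (2 * h w0)) (at w0)"
    by (rule tendsto_divide[OF pl sl]) (use h0 in simp)
  have "\<forall>\<^sub>F v in at w0. ((p v - p w0) / (v - w0)) / (h v + h w0) = (h v - h w0) / (v - w0)"
    using ev1 ev2
  proof eventually_elim
    case (elim v)
    have "p v - p w0 = (h v - h w0) * (h v + h w0)"
      using hp[OF elim(2)] hp[OF w0] by (simp add: power2_eq_square algebra_simps)
    then show ?case using elim(1) by (metis (no_types, lifting) nonzero_mult_div_cancel_right times_divide_eq_left)
  qed
  then have "((\<lambda>v. (h v - h w0) / (v - w0)) \<longlongrightarrow> p' / (2 * h w0)) (at w0)"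
    by (rule Lim_transform_eventually[OF ql])
  then show ?thesis by (simp add: has_field_derivative_iff)
qed

lemma lame_part:
  fixes h p p1 p2 :: "complex \<Rightarrow> complex" and t y :: complex
  assumes S: "open S" and hc: "continuous_on S h" and hp: "\<And>w. w \<in> S \<Longrightarrow> h w ^ 2 = p w"
    and pn: "\<And>w. w \<in> S \<Longrightarrow> p w \<noteq> 0"
    and pd: "\<And>w. w \<in> S \<Longrightarrow> (p has_field_derivative p1 w) (at w)"
    and pd1: "\<And>w. w \<in> S \<Longrightarrow> (p1 has_field_derivative p2 w) (at w)"
    and yS: "y \<in> S"
  shows "deriv (\<lambda>w. w*(w-1)*(w-t) * deriv (\<lambda>v. 1 / h v) w) y + y * (1 / h y)
    = (-(3*y^2 - 2*(1+t)*y + t)*p1 y/(2*p y) - y*(y-1)*(y-t)*p2 y/(2*p y)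
       + 3*y*(y-1)*(y-t)*(p1 y)^2/(4*(p y)^2) + y) / h y"
proof -
  have hn: "h w \<noteq> 0" if "w \<in> S" for w using hp[OF that] pn[OF that] by auto
  have hd: "(h has_field_derivative p1 w / (2 * h w)) (at w)" if "w \<in> S" for w
    by (rule sqrt_deriv[OF S hc hp pn pd[OF that] that])
  have dinv: "deriv (\<lambda>v. 1 / h v) w = -(p1 w) / (2 * h w * p w)" if w: "w \<in> S" for w
  proof -
    have "((\<lambda>v. inverse (h v)) has_field_derivative - (p1 w / (2 * h w) * inverse (h w ^ Suc (Suc 0)))) (at w)"
      by (rule DERIV_inverse_fun[OF hd[OF w] hn[OF w]])
    moreover have "- (p1 w / (2 * h w) * inverse (h w ^ Suc (Suc 0))) = -(p1 w) / (2 * h w * p w)"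
      using hp[OF w] by (simp add: power2_eq_square field_simps)
    ultimately show ?thesis by (simp add: DERIV_imp_deriv inverse_eq_divide)
  qed
  have ev: "\<forall>\<^sub>F w in nhds y. w*(w-1)*(w-t) * deriv (\<lambda>v. 1 / h v) w
       = w*(w-1)*(w-t) * (-(p1 w) / (2 * h w * p w))"
    using eventually_nhds_in_open[OF S yS] by eventually_elim (simp add: dinv)
  have q: "((\<lambda>w. 2*h w*p w) has_field_derivative 2*(p1 y/(2*h y)*p y + h y*p1 y)) (at y)"
    using DERIV_mult[OF DERIV_cmult[OF hd[OF yS], of 2] pd[OF yS]] by (simp add: algebra_simps)
  have r: "((\<lambda>w. -(p1 w)/(2*h w*p w)) has_field_derivative
      ((-(p2 y))*(2*h y*p y) - (-(p1 y))*(2*(p1 y/(2*h y)*p y + h y*p1 y)))/((2*h y*p y)*(2*h y*p y))) (at y)"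
    by (rule DERIV_divide[OF DERIV_minus[OF pd1[OF yS]] q]) (use hn[OF yS] pn[OF yS] in simp)
  have P: "((\<lambda>w. w*(w-1)*(w-t)) has_field_derivative 3*y^2 - 2*(1+t)*y + t) (at y)"
    apply (rule derivative_eq_intros refl)+
    by (simp add: algebra_simps power2_eq_square)
  have "deriv (\<lambda>w. w*(w-1)*(w-t) * deriv (\<lambda>v. 1 / h v) w) y
      = deriv (\<lambda>w. w*(w-1)*(w-t) * (-(p1 w) / (2 * h w * p w))) y"
    by (rule deriv_cong_ev[OF ev refl])
  also have "\<dots> = (3*y^2 - 2*(1+t)*y + t) * (-(p1 y) / (2 * h y * p y)) +
      ((-(p2 y))*(2*h y*p y) - (-(p1 y))*(2*(p1 y/(2*h y)*p y + h y*p1 y)))/((2*h y*p y)*(2*h y*p y)) * (y*(y-1)*(y-t))"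
    by (rule DERIV_imp_deriv[OF DERIV_mult[OF P r]])
  finally have E: "deriv (\<lambda>w. w*(w-1)*(w-t) * deriv (\<lambda>v. 1 / h v) w) y = \<dots>" .
  have hy: "h y \<noteq> 0" by (rule hn[OF yS])
  show ?thesis unfolding E hp[OF yS, symmetric] using hy
    by (simp add: field_simps power2_eq_square)
qed


lemma key_gen:
  fixes p F G y z t x :: complex
  assumes fn: "p \<noteq> 0"
    and eq: "-2*p*(3*y^2 - 2*(1+t)*y + t)*F - 2*p*y*(y-1)*(y-t)*(2*(x-z)^2)
       + 3*y*(y-1)*(y-t)*F^2 + 4*y*p^2
     = -2*p*(3*z^2 - 2*(1+t)*z + t)*G - 2*p*z*(z-1)*(z-t)*(2*(x+y)^2 - 8*x*y)
       + 3*z*(z-1)*(z-t)*G^2 + 4*z*p^2"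
  shows "-(3*y^2 - 2*(1+t)*y + t)*F/(2*p) - y*(y-1)*(y-t)*(2*(x-z)^2)/(2*p)
       + 3*y*(y-1)*(y-t)*F^2/(4*p^2) + y
     = -(3*z^2 - 2*(1+t)*z + t)*G/(2*p) - z*(z-1)*(z-t)*(2*(x+y)^2 - 8*x*y)/(2*p)
       + 3*z*(z-1)*(z-t)*G^2/(4*p^2) + z"
proof -
  have "(-(3*y^2 - 2*(1+t)*y + t)*F/(2*p) - y*(y-1)*(y-t)*(2*(x-z)^2)/(2*p)
       + 3*y*(y-1)*(y-t)*F^2/(4*p^2) + y) * (4*p^2) = 
       -2*p*(3*y^2 - 2*(1+t)*y + t)*F - 2*p*y*(y-1)*(y-t)*(2*(x-z)^2)
       + 3*y*(y-1)*(y-t)*F^2 + 4*y*p^2"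
    using fn by (simp add: field_simps power2_eq_square)
  moreover have "(-(3*z^2 - 2*(1+t)*z + t)*G/(2*p) - z*(z-1)*(z-t)*(2*(x+y)^2 - 8*x*y)/(2*p)
       + 3*z*(z-1)*(z-t)*G^2/(4*p^2) + z) * (4*p^2) =
       -2*p*(3*z^2 - 2*(1+t)*z + t)*G - 2*p*z*(z-1)*(z-t)*(2*(x+y)^2 - 8*x*y)
       + 3*z*(z-1)*(z-t)*G^2 + 4*z*p^2"
    using fn by (simp add: field_simps power2_eq_square)
  ultimately show ?thesis using eq fn by (metis mult_right_cancel power_not_zero zero_neq_numeral mult_eq_0_iff)
qed

lemma slice_props:
  fixes U :: "(complex \<times> complex) set" and g :: "complex \<times> complex \<Rightarrow> complex" and a :: "complex \<Rightarrow> complex \<times> complex"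
  assumes "open U" "continuous_on U g" "continuous_on UNIV a"
  shows "open (a -` U)" "continuous_on (a -` U) (\<lambda>v. g (a v))"
proof -
  have "\<And>x. continuous (at x) a" using assms(3) continuous_on_eq_continuous_at[OF open_UNIV] by blast
  then show "open (a -` U)" by (rule continuous_open_vimage[OF assms(1)])
  show "continuous_on (a -` U) (\<lambda>v. g (a v))"
    by (rule continuous_on_compose2[OF assms(2) continuous_on_subset[OF assms(3) subset_UNIV] image_vimage_subset])
qed

theorem proposition5p14:
  fixes t x :: complex and U :: "(complex \<times> complex) set" and g :: "complex \<times> complex \<Rightarrow> complex"
  assumes "open U"
    and "\<And>y z. (y, z) \<in> U \<Longrightarrow> ft t x y z \<noteq> 0"
    and "continuous_on U g"
    and "\<And>y z. (y, z) \<in> U \<Longrightarrow> (g (y, z))^2 = ft t x y z"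
    and "(y, z) \<in> U"
  shows "lame_y t (\<lambda>a b. 1 / g (a, b)) y z - lame_z t (\<lambda>a b. 1 / g (a, b)) y z = 0"
proof -
  define fy where "fy = (\<lambda>u. 2*(t + x*u - z*x - z*u)*(x - z) - 4*(z-t)*(z-1)*x)"
  define fz where "fz = (\<lambda>w. 2*(t + x*y - w*x - w*y)*(-x-y) - 4*x*y*(2*w - 1 - t))"
  have ca: "continuous_on UNIV (\<lambda>v::complex. (v, z))" by (intro continuous_intros)
  have cb: "continuous_on UNIV (\<lambda>v::complex. (y, v))" by (intro continuous_intros)
  have Sy: "open ((\<lambda>v. (v, z)) -` U)" "continuous_on ((\<lambda>v. (v, z)) -` U) (\<lambda>v. g (v, z))"
    using slice_props[OF assms(1,3) ca] by simp_all
  have Sz: "open ((\<lambda>v. (y, v)) -` U)" "continuous_on ((\<lambda>v. (y, v)) -` U) (\<lambda>v. g (y, v))"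
    using slice_props[OF assms(1,3) cb] by simp_all
  have hy1: "\<And>w. w \<in> (\<lambda>v. (v, z)) -` U \<Longrightarrow> g (w, z) ^ 2 = ft t x w z" using assms(4) by simp
  have hy2: "\<And>w. w \<in> (\<lambda>v. (v, z)) -` U \<Longrightarrow> ft t x w z \<noteq> 0" using assms(2) by simp
  have hy3: "y \<in> (\<lambda>v. (v, z)) -` U" using assms(5) by simp
  have hy4: "((\<lambda>v. ft t x v z) has_field_derivative fy w) (at w)" for w
    unfolding ft_def fy_def
    by (rule derivative_eq_intros refl)+ (simp add: algebra_simps power2_eq_square)
  have hy5: "(fy has_field_derivative 2*(x-z)^2) (at w)" for w
    unfolding fy_def
    by (rule derivative_eq_intros refl)+ (simp add: algebra_simps power2_eq_square)
  have hz1: "\<And>w. w \<in> (\<lambda>v. (y, v)) -` U \<Longrightarrow> g (y, w) ^ 2 = ft t x y w" using assms(4) by simp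
  have hz2: "\<And>w. w \<in> (\<lambda>v. (y, v)) -` U \<Longrightarrow> ft t x y w \<noteq> 0" using assms(2) by simp
  have hz3: "z \<in> (\<lambda>v. (y, v)) -` U" using assms(5) by simp
  have hz4: "((\<lambda>v. ft t x y v) has_field_derivative fz w) (at w)" for w
    unfolding ft_def fz_def
    by (rule derivative_eq_intros refl)+ (simp add: algebra_simps power2_eq_square)
  have hz5: "(fz has_field_derivative 2*(x+y)^2 - 8*x*y) (at w)" for w
    unfolding fz_def
    by (rule derivative_eq_intros refl)+ (simp add: algebra_simps power2_eq_square)
  note Y0 = lame_part[where S = "(\<lambda>v. (v, z)) -` U" and h = "\<lambda>v. g (v, z)" and p = "\<lambda>v. ft t x v z" and ?p1.0 = fy and ?p2.0 = "\<lambda>_. 2*(x-z)^2" and t = t and y = y, OF Sy hy1 hy2 hy4 hy5 hy3]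
  note Z0 = lame_part[where S = "(\<lambda>v. (y, v)) -` U" and h = "\<lambda>v. g (y, v)" and p = "\<lambda>v. ft t x y v" and ?p1.0 = fz and ?p2.0 = "\<lambda>_. 2*(x+y)^2 - 8*x*y" and t = t and y = z, OF Sz hz1 hz2 hz4 hz5 hz3]
  have Y: "lame_y t (\<lambda>a b. 1 / g (a, b)) y z =
     (-(3*y^2 - 2*(1+t)*y + t)*fy y/(2*ft t x y z) - y*(y-1)*(y-t)*(2*(x-z)^2)/(2*ft t x y z)
       + 3*y*(y-1)*(y-t)*(fy y)^2/(4*(ft t x y z)^2) + y) / g (y, z)"
    unfolding lame_y_def by (rule Y0)
  have Z: "lame_z t (\<lambda>a b. 1 / g (a, b)) y z =
     (-(3*z^2 - 2*(1+t)*z + t)*fz z/(2*ft t x y z) - z*(z-1)*(z-t)*(2*(x+y)^2 - 8*x*y)/(2*ft t x y z)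
       + 3*z*(z-1)*(z-t)*(fz z)^2/(4*(ft t x y z)^2) + z) / g (y, z)"
    unfolding lame_z_def by (rule Z0)
  have fn: "ft t x y z \<noteq> 0" using assms(2,5) by auto
  have key: "-(3*y^2 - 2*(1+t)*y + t)*fy y/(2*ft t x y z) - y*(y-1)*(y-t)*(2*(x-z)^2)/(2*ft t x y z)
       + 3*y*(y-1)*(y-t)*(fy y)^2/(4*(ft t x y z)^2) + y
     = -(3*z^2 - 2*(1+t)*z + t)*fz z/(2*ft t x y z) - z*(z-1)*(z-t)*(2*(x+y)^2 - 8*x*y)/(2*ft t x y z)
       + 3*z*(z-1)*(z-t)*(fz z)^2/(4*(ft t x y z)^2) + z"
  proof -
    have "-2*ft t x y z*(3*y^2 - 2*(1+t)*y + t)*fy y - 2*ft t x y z*y*(y-1)*(y-t)*(2*(x-z)^2)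
       + 3*y*(y-1)*(y-t)*(fy y)^2 + 4*y*(ft t x y z)^2
     = -2*ft t x y z*(3*z^2 - 2*(1+t)*z + t)*fz z - 2*ft t x y z*z*(z-1)*(z-t)*(2*(x+y)^2 - 8*x*y)
       + 3*z*(z-1)*(z-t)*(fz z)^2 + 4*z*(ft t x y z)^2"
      unfolding ft_def fy_def fz_def by algebra
    then show ?thesis by (rule key_gen[OF fn])
  qed
  show ?thesis unfolding Y Z key by simp
qed
end
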